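(* Let $d\ge 3$. For every $1\le i<d$, the element $a_1a_2\cdots a_i$ has infinite order in $G_d$.
   Context: Let $d\ge 3$, $X=\{1,\dots,d\}$, $T$ the $d$-regular rooted tree with vertex set $X^*$. $\mathrm{Aut}(T)$ is the group of root-preserving automorphisms with product left-to-right: $(gh)(u)=h(g(u))$. Sections $g|_u$ are defined by $g(uv)=g(u)\,g|_u(v)$; we write $g=(g|_1,\dots,g|_d)\lambda_g$ with $\lambda_g\in S_d$ the action on the first level; $e$ is the identity; $\overline{j}\in\{1,\dots,d\}$ denotes $j$ mod $d$. $G_d=\langle a_1,\dots,a_d\rangle\le\mathrm{Aut}(T)$ where $a_i$ acts on the first level as $(i\ \overline{i+1})$, with $a_i|_i=a_i$, $a_i|_{\overline{i+1}}=a_{\overline{i+1}}$, and $a_i|_x=e$ otherwise. *)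

theory Defs
  imports Main
begin

text \<open>Vertices of the d-regular rooted tree: finite words over {1..d}.
  An automorphism is represented by its action on words (nat list => nat list).\<close>

definition tree_vertices :: "nat \<Rightarrow> nat list set" where
  "tree_vertices d = {w. set w \<subseteq> {1..d}}"

definition cyc_succ :: "nat \<Rightarrow> nat \<Rightarrow> nat" where
  "cyc_succ d j = (j mod d) + 1"

text \<open>Action of the generator a_i: first level acts as the transposition
  (i, overline(i+1)); section at i is a_i, section at overline(i+1) is
  a_(overline(i+1)), all other sections trivial.\<close>
fun gen_act :: "nat \<Rightarrow> nat \<Rightarrow> nat list \<Rightarrow> nat list" where
  "gen_act d i [] = []"
| "gen_act d i (x # w) =
     (if x = i then cyc_succ d i # gen_act d i w
      else if x = cyc_succ d i then i # gen_act d (cyc_succ d i) w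
      else x # w)"

text \<open>Product is left-to-right: (g h)(u) = h (g u). The element
  a_{j1} a_{j2} ... a_{jk} therefore acts as first a_{j1}, then a_{j2}, etc.\<close>
definition word_act :: "nat \<Rightarrow> nat list \<Rightarrow> nat list \<Rightarrow> nat list" where
  "word_act d js = foldl (\<lambda>f j. gen_act d j \<circ> f) id js"

definition infinite_order_aut :: "nat \<Rightarrow> (nat list \<Rightarrow> nat list) \<Rightarrow> bool" where
  "infinite_order_aut d g \<longleftrightarrow>
     (\<forall>n::nat. n \<ge> 1 \<longrightarrow> (\<exists>u \<in> tree_vertices d. (g ^^ n) u \<noteq> u))"

end

theory Submission
  imports Defs
begin


lemma wa_Nil[simp]: "word_act d [] = id" by (simp add: word_act_def)

lemma foldl_gen: "foldl (\<lambda>f j. gen_act d j \<circ> f) (f0::nat list \<Rightarrow> nat list) js = foldl (\<lambda>f j. gen_act d j \<circ> f) id js \<circ> f0"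
proof (induction js arbitrary: f0)
  case Nil then show ?case by simp
next
  case (Cons j js)
  have 1: "foldl (\<lambda>f j. gen_act d j \<circ> f) (gen_act d j \<circ> f0) js = foldl (\<lambda>f j. gen_act d j \<circ> f) id js \<circ> (gen_act d j \<circ> f0)"
    by (rule Cons.IH)
  have 2: "foldl (\<lambda>f j. gen_act d j \<circ> f) (gen_act d j) js = foldl (\<lambda>f j. gen_act d j \<circ> f) id js \<circ> (gen_act d j)"
    by (rule Cons.IH)
  show ?case by (simp only: foldl_Cons 1 2 comp_assoc comp_id)
qed

lemma wa_Cons: "word_act d (j#js) = word_act d js \<circ> gen_act d j"
  by (simp only: word_act_def foldl_Cons foldl_gen[of d "gen_act d j"] comp_id)

lemma wa_append: "word_act d (xs@ys) w = word_act d ys (word_act d xs w)"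
  by (induction xs arbitrary: w) (simp_all add: wa_Cons)

lemma wa_single: "word_act d [j] = gen_act d j" by (simp add: wa_Cons)

lemma cs_lt: "j < d \<Longrightarrow> cyc_succ d j = Suc j" by (simp add: cyc_succ_def)
lemma cs_d: "0 < d \<Longrightarrow> cyc_succ d d = 1" by (simp add: cyc_succ_def)

lemma ga_j: "j < d \<Longrightarrow> gen_act d j (j#w) = Suc j # gen_act d j w"
  by (simp add: cs_lt)
lemma ga_sj: "j < d \<Longrightarrow> gen_act d j (Suc j#w) = j # gen_act d (Suc j) w"
  by (simp add: cs_lt)
lemma ga_fix: "j < d \<Longrightarrow> x \<noteq> j \<Longrightarrow> x \<noteq> Suc j \<Longrightarrow> gen_act d j (x#w) = x # w"
  by (simp add: cs_lt)
lemma ga_dd: "1 < d \<Longrightarrow> gen_act d d (d#w) = 1 # gen_act d d w"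
  by (simp add: cs_d)
lemma ga_d1: "1 < d \<Longrightarrow> gen_act d d (1#w) = d # gen_act d 1 w"
  by (simp add: cs_d)
lemma ga_d1': "1 < d \<Longrightarrow> gen_act d d (Suc 0#w) = d # gen_act d (Suc 0) w"
  by (simp add: cs_d)
lemma ga_dd': "1 < d \<Longrightarrow> gen_act d d (d#w) = Suc 0 # gen_act d d w"
  by (simp add: cs_d)
lemma ga_dfix: "1 < d \<Longrightarrow> x \<noteq> d \<Longrightarrow> x \<noteq> 1 \<Longrightarrow> gen_act d d (x#w) = x # w"
  by (simp add: cs_d)

declare gen_act.simps(2)[simp del]

lemma P_all: assumes "1 \<le> a" "e \<le> d"
  shows "((x < a \<or> e < x) \<longrightarrow> word_act d [a..<e] (x#w) = x#w)
       \<and> (a < e \<longrightarrow> word_act d [a..<e] (a#w) = e # word_act d [a..<e] w)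
       \<and> (a < x \<and> x \<le> e \<longrightarrow> word_act d [a..<e] (x#w) = (x-1) # gen_act d x w)"
  using assms
proof (induction e arbitrary: x w)
  case 0 then show ?case by auto
next
  case (Suc e)
  show ?case
  proof (cases "a \<le> e")
    case False
    then have "a = Suc e \<or> Suc e < a" by auto
    then show ?thesis using False by auto
  next
    case True
    have L: "[a..<Suc e] = [a..<e] @ [e]" using True by simp
    have ed: "e < d" using Suc by simp
    show ?thesis
    proof (intro conjI impI)
      assume h: "x < a \<or> Suc e < x"
      have "word_act d [a..<e] (x#w) = x#w" using Suc h by auto
      moreover have "x \<noteq> e" "x \<noteq> Suc e" using h True by auto
      ultimately show "word_act d [a..<Suc e] (x#w) = x#w"
        using h True ed by (simp add: L wa_append wa_single ga_fix)
    next
      assume "a < Suc e"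
      show "word_act d [a..<Suc e] (a#w) = Suc e # word_act d [a..<Suc e] w"
      proof (cases "a = e")
        case True
        then show ?thesis using ed by (simp add: wa_single ga_j upt_rec[of e "Suc e"])
      next
        case False
        then have "a < e" using True by simp
        then have "word_act d [a..<e] (a#w) = e # word_act d [a..<e] w" using Suc by auto
        then show ?thesis using ed \<open>a < e\<close> by (simp add: L wa_append wa_single ga_j)
      qed
    next
      assume h: "a < x \<and> x \<le> Suc e"
      show "word_act d [a..<Suc e] (x#w) = (x-1) # gen_act d x w"
      proof (cases "x = Suc e")
        case True
        have "word_act d [a..<e] (Suc e#w) = Suc e#w" using Suc by auto
        then show ?thesis using True ed \<open>a \<le> e\<close> by (simp add: L wa_append wa_single ga_sj)
      next
        case False
        then have "a < x \<and> x \<le> e" using h by simp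
        then have "word_act d [a..<e] (x#w) = (x-1) # gen_act d x w" using Suc by auto
        moreover have "x - 1 \<noteq> e" "x - 1 \<noteq> Suc e" using h False by auto
        ultimately show ?thesis using ed \<open>a \<le> e\<close> by (simp add: L wa_append wa_single ga_fix)
      qed
    qed
  qed
qed

lemma P_fix: "1 \<le> a \<Longrightarrow> e \<le> d \<Longrightarrow> x < a \<or> e < x \<Longrightarrow> word_act d [a..<e] (x#w) = x#w"
  using P_all by blast
lemma P_first: "1 \<le> a \<Longrightarrow> e \<le> d \<Longrightarrow> a < e \<Longrightarrow> word_act d [a..<e] (a#w) = e # word_act d [a..<e] w"
  using P_all by blast
lemma P_mid: "1 \<le> a \<Longrightarrow> e \<le> d \<Longrightarrow> a < x \<Longrightarrow> x \<le> e \<Longrightarrow> word_act d [a..<e] (x#w) = (x-1) # gen_act d x w"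
  using P_all by blast

lemma R_all: assumes "1 \<le> a" "e \<le> d"
  shows "((x < a \<or> e < x) \<longrightarrow> word_act d (rev [a..<e]) (x#w) = x#w)
       \<and> (a \<le> x \<and> x < e \<longrightarrow> word_act d (rev [a..<e]) (x#w) = Suc x # gen_act d x w)
       \<and> (a \<le> e \<longrightarrow> word_act d (rev [a..<e]) (e#w) = a # word_act d (rev [Suc a..<Suc e]) w)"
  using assms
proof (induction e arbitrary: x w)
  case 0 then show ?case by auto
next
  case (Suc e)
  show ?case
  proof (cases "a \<le> e")
    case False
    then have "a = Suc e \<or> Suc e < a" by auto
    then show ?thesis using False by auto
  next
    case True
    have L: "rev [a..<Suc e] = e # rev [a..<e]" using True by simp
    have ed: "e < d" using Suc by simp
    show ?thesis
    proof (intro conjI impI)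
      assume h: "x < a \<or> Suc e < x"
      have "word_act d (rev [a..<e]) (x#w) = x#w" using Suc h by auto
      moreover have "x \<noteq> e" "x \<noteq> Suc e" using h True by auto
      ultimately show "word_act d (rev [a..<Suc e]) (x#w) = x#w"
        using ed by (simp add: L wa_Cons ga_fix)
    next
      assume h: "a \<le> x \<and> x < Suc e"
      show "word_act d (rev [a..<Suc e]) (x#w) = Suc x # gen_act d x w"
      proof (cases "x = e")
        case True
        have "word_act d (rev [a..<e]) (Suc e # w') = Suc e # w'" for w' using Suc by auto
        then show ?thesis using True ed \<open>a \<le> e\<close> by (simp add: L wa_Cons ga_j)
      next
        case False
        then have "a \<le> x \<and> x < e" using h by simp
        then have "word_act d (rev [a..<e]) (x#w) = Suc x # gen_act d x w" using Suc by auto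
        moreover have "x \<noteq> e" "x \<noteq> Suc e" using h False by auto
        ultimately show ?thesis using ed \<open>a \<le> e\<close> by (simp add: L wa_Cons ga_fix)
      qed
    next
      assume "a \<le> Suc e"
      have IH: "word_act d (rev [a..<e]) (e # w') = a # word_act d (rev [Suc a..<Suc e]) w'" for w'
        using Suc True by auto
      have M: "rev [Suc a..<Suc (Suc e)] = Suc e # rev [Suc a..<Suc e]" using True by simp
      show "word_act d (rev [a..<Suc e]) (Suc e#w) = a # word_act d (rev [Suc a..<Suc (Suc e)]) w"
        by (simp only: L M wa_Cons comp_apply ga_sj[OF ed] IH)
    qed
  qed
qed

lemma R_fix: "1 \<le> a \<Longrightarrow> e \<le> d \<Longrightarrow> x < a \<or> e < x \<Longrightarrow> word_act d (rev [a..<e]) (x#w) = x#w"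
  using R_all by blast
lemma R_mid: "1 \<le> a \<Longrightarrow> e \<le> d \<Longrightarrow> a \<le> x \<Longrightarrow> x < e \<Longrightarrow> word_act d (rev [a..<e]) (x#w) = Suc x # gen_act d x w"
  using R_all by blast
lemma R_top: "1 \<le> a \<Longrightarrow> e \<le> d \<Longrightarrow> a \<le> e \<Longrightarrow> word_act d (rev [a..<e]) (e#w) = a # word_act d (rev [Suc a..<Suc e]) w"
  using R_all by blast




context fixes d :: nat assumes d3: "3 \<le> d" begin

definition "cc = word_act d [1..<Suc d]"
definition "bb = word_act d (2#1#rev [3..<Suc d])"

lemma cL: "word_act d [1..<Suc d] w = gen_act d d (word_act d [1..<d] w)"
  using d3 by (simp add: wa_append wa_single)

lemma C1: "cc (2#w) = d # word_act d [2,1] w"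
  using d3 unfolding cc_def cL by (simp add: P_mid ga_d1 ga_d1' wa_Cons)
lemma C2: "3 \<le> x \<Longrightarrow> x \<le> d \<Longrightarrow> cc (x#w) = (x-1) # gen_act d x w"
  using d3 unfolding cc_def cL by (simp add: P_mid ga_dfix)
lemma C3: "cc (Suc 0#w) = Suc 0 # cc w"
  using d3 unfolding cc_def cL by (simp add: P_first ga_dd ga_dd')

lemma bL: "bb w = word_act d (rev [3..<d]) (gen_act d d (gen_act d 1 (gen_act d 2 w)))"
proof -
  have "rev [3..<Suc d] = d # rev [3..<d]" using d3 by simp
  then show ?thesis unfolding bb_def by (simp add: wa_Cons)
qed

lemma B1: "bb (Suc 0#w) = 2 # gen_act d (Suc 0) w"
  using d3 by (simp add: bL ga_fix ga_j ga_dfix R_fix)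
lemma B2: "bb (2#w) = (if d = 3 then 1 else 4) # word_act d [2,3] w"
proof (cases "d = 3")
  case True
  then show ?thesis unfolding bL by (simp add: ga_fix ga_j ga_dd ga_dd' wa_Cons)
next
  case False
  then show ?thesis using d3 by (simp add: bL ga_fix ga_j ga_dfix R_mid wa_Cons)
qed
lemma B3: "4 \<le> x \<Longrightarrow> x < d \<Longrightarrow> bb (x#w) = Suc x # gen_act d x w"
  using d3 by (simp add: bL ga_fix ga_dfix R_mid)
lemma B4: "4 \<le> d \<Longrightarrow> bb (d#w) = 1 # gen_act d d w"
  using d3 by (simp add: bL ga_fix ga_dd ga_dd' R_fix)

lemma C_cyc: "k \<le> d-2 \<Longrightarrow> (cc^^Suc k) (2#w) = (d-k) # word_act d (2#1#rev[Suc d - k..<Suc d]) w"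
proof (induction k)
  case 0 then show ?case by (simp add: C1)
next
  case (Suc k)
  have s: "Suc d - k = Suc (d-k)" using Suc.prems d3 by simp
  have e: "[d - k..<Suc d] = (d-k) # [Suc d - k..<Suc d]" unfolding s
    by (rule upt_conv_Cons) simp
  have x: "Suc d - Suc k = d - k" by simp
  have dk: "d - k - 1 = d - Suc k" by simp
  have L: "2#1#rev[d-k..<Suc d] = (2#1#rev[Suc d - k..<Suc d]) @ [d-k]"
    by (simp only: e rev.simps append_Cons)
  have "(cc^^Suc (Suc k)) (2#w) = cc ((d-k) # word_act d (2#1#rev[Suc d - k..<Suc d]) w)"
    using Suc by simp
  also have "\<dots> = (d-k-1) # gen_act d (d-k) (word_act d (2#1#rev[Suc d - k..<Suc d]) w)"
    using Suc.prems by (intro C2) auto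
  also have "\<dots> = (d - Suc k) # word_act d (2#1#rev[Suc d - Suc k..<Suc d]) w"
    by (simp only: dk x L wa_append wa_single)
  finally show ?case .
qed

lemma C_ret: "(cc^^(d-1)) (2#w) = 2 # bb w"
proof -
  have "d - 1 = Suc (d-2)" using d3 by simp
  then have "(cc^^(d-1)) (2#w) = (d-(d-2)) # word_act d (2#1#rev[Suc d - (d-2)..<Suc d]) w"
    using C_cyc[of "d-2" w] by simp
  also have "\<dots> = 2 # bb w" using d3 unfolding bb_def by (simp add: numeral_eq_Suc Suc_diff_le)
  finally show ?thesis .
qed

lemma C_nret: "1 \<le> r \<Longrightarrow> r < d-1 \<Longrightarrow> \<exists>y v. (cc^^r) (2#w) = y # v \<and> y \<noteq> 2"
proof -
  assume r: "1 \<le> r" "r < d-1"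
  then obtain k where k: "r = Suc k" "k \<le> d-2" by (cases r) auto
  show ?thesis using C_cyc[OF k(2)] k r by auto
qed

lemma B_cyc: "1 \<le> k \<Longrightarrow> k \<le> d-2 \<Longrightarrow> (bb^^Suc k) (1#w) = (if k = d-2 then 1 else k+3) # word_act d [1..<k+3] w"
proof (induction k rule: dec_induct)
  case base
  have "(bb^^Suc 1) (1#w) = bb (2 # gen_act d (Suc 0) w)" by (simp add: B1)
  also have "\<dots> = (if d = 3 then 1 else 4) # word_act d [2,3] (gen_act d (Suc 0) w)"
    by (rule B2)
  also have "word_act d [2,3] (gen_act d (Suc 0) w) = word_act d [1..<4] w"
  proof -
    have "[1..<4] = [1,2,3::nat]" by (simp add: upt_rec)
    then show ?thesis by (simp add: wa_Cons)
  qed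
  finally show ?case using d3 by auto
next
  case (step k)
  have kk: "k \<noteq> d - 2" using step by simp
  have "(bb^^Suc (Suc k)) (1#w) = bb ((k+3) # word_act d [1..<k+3] w)"
    using step kk by simp
  also have "\<dots> = (if Suc k = d-2 then 1 else Suc k+3) # gen_act d (k+3) (word_act d [1..<k+3] w)"
  proof (cases "Suc k = d-2")
    case True
    then have "k+3 = d" "4 \<le> d" using step by auto
    then show ?thesis using True B4 by simp
  next
    case False
    then show ?thesis using step by (simp add: B3)
  qed
  also have "\<dots> = (if Suc k = d-2 then 1 else Suc k+3) # word_act d [1..<Suc k+3] w"
  proof -
    have "[1..<Suc k+3] = [1..<k+3]@[k+3]" by (simp add: upt_Suc_append[symmetric])
    then show ?thesis by (simp only: wa_append wa_single)
  qed
  finally show ?case .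
qed

lemma B_ret: "(bb^^(d-1)) (1#w) = 1 # cc w"
proof -
  have "d - 1 = Suc (d-2)" using d3 by simp
  moreover have "d-2+3 = Suc d" using d3 by simp
  ultimately show ?thesis using B_cyc[of "d-2" w] d3 unfolding cc_def by simp
qed

lemma B_nret: "1 \<le> r \<Longrightarrow> r < d-1 \<Longrightarrow> \<exists>y v. (bb^^r) (1#w) = y # v \<and> y \<noteq> 1"
proof -
  assume r: "1 \<le> r" "r < d-1"
  show ?thesis
  proof (cases "r = 1")
    case True then show ?thesis by (simp add: B1)
  next
    case False
    then obtain k where k: "r = Suc k" "1 \<le> k" "k \<le> d-2" using r by (cases r) auto
    show ?thesis using B_cyc[OF k(2,3)] k r by auto
  qed
qed

end



lemma tv_Cons: "x \<in> {1..d} \<Longrightarrow> u \<in> tree_vertices d \<Longrightarrow> x#u \<in> tree_vertices d"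
  by (simp add: tree_vertices_def)
lemma tv_Nil: "[] \<in> tree_vertices d"
  by (simp add: tree_vertices_def)

lemma iter_fix: "(\<And>w. f (x#w) = x # h w) \<Longrightarrow> (f^^n) (x#w) = x # (h^^n) w"
  by (induction n arbitrary: w) auto

lemma pow_fix: "f v = v \<Longrightarrow> (f^^k) v = v"
  by (induction k) auto

lemma lift:
  assumes k: "1 \<le> k" and x: "x \<in> {1..d}" and sec: "\<And>w. (g^^k) (x#w) = x # h w"
    and inf: "infinite_order_aut d h"
  shows "infinite_order_aut d g"
  unfolding infinite_order_aut_def
proof (intro allI impI)
  fix n :: nat assume n: "1 \<le> n"
  from inf n obtain u where u: "u \<in> tree_vertices d" "(h^^n) u \<noteq> u"
    unfolding infinite_order_aut_def by blast
  show "\<exists>v\<in>tree_vertices d. (g^^n) v \<noteq> v"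
  proof (rule ccontr)
    assume "\<not> ?thesis"
    then have fx: "(g^^n) (x#u) = x#u" using tv_Cons[OF x u(1)] by blast
    have "((g^^n)^^k) (x#u) = x#u" by (rule pow_fix[where f="g^^n", OF fx])
    moreover have "((g^^n)^^k) = ((g^^k)^^n)" by (simp add: funpow_mult mult.commute)
    moreover have "((g^^k)^^n) (x#u) = x # (h^^n) u" by (rule iter_fix[where f="g^^k", OF sec])
    ultimately show False using u(2) by simp
  qed
qed

lemma period_step:
  assumes p: "2 \<le> p" and x: "x \<in> {1..d}" and sec: "\<And>w. (f^^p) (x#w) = x # h w"
    and nr: "\<And>r w. 1 \<le> r \<Longrightarrow> r < p \<Longrightarrow> \<exists>y v. (f^^r) (x#w) = y#v \<and> y \<noteq> x"
    and n: "1 \<le> n" and IH: "\<And>q. 1 \<le> q \<Longrightarrow> q < n \<Longrightarrow> \<exists>u\<in>tree_vertices d. (h^^q) u \<noteq> u"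
  shows "\<exists>u\<in>tree_vertices d. (f^^n) u \<noteq> u"
proof -
  define q where "q = n div p"
  define r where "r = n mod p"
  have nd: "n = r + p*q" unfolding q_def r_def by simp
  have fn: "f^^n = (f^^r) \<circ> ((f^^p)^^q)" by (simp add: nd funpow_add funpow_mult)
  show ?thesis
  proof (cases "r = 0")
    case False
    have "r < p" unfolding r_def using p by simp
    then obtain y v where yv: "(f^^r) (x # (h^^q) []) = y#v" "y \<noteq> x"
      using nr[of r] False by force
    have "(f^^n) [x] = y#v" using yv(1) by (simp add: fn iter_fix[where f="f^^p", OF sec])
    then show ?thesis using yv(2) tv_Cons[OF x tv_Nil] by force
  next
    case True
    then have "n = p*q" using nd by simp
    then have nq: "n = p*q" .
    have q1: "1 \<le> q" using nq n by (cases q) auto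
    have "2*q \<le> p*q" using p by simp
    then have q2: "q < n" using nq q1 by linarith
    note q = q1 q2
    obtain u where u: "u \<in> tree_vertices d" "(h^^q) u \<noteq> u" using IH[OF q] by blast
    have "(f^^n) (x#u) = x # (h^^q) u" using True by (simp add: fn iter_fix[where f="f^^p", OF sec])
    then show ?thesis using u tv_Cons[OF x u(1)] by force
  qed
qed

context fixes d :: nat assumes d3: "3 \<le> d" begin

lemma bc_inf: "1 \<le> n \<Longrightarrow> (\<exists>u\<in>tree_vertices d. (cc d^^n) u \<noteq> u) \<and> (\<exists>u\<in>tree_vertices d. (bb d^^n) u \<noteq> u)"
proof (induction n rule: less_induct)
  case (less n)
  have p: "2 \<le> d - 1" using d3 by simp
  show ?case
  proof
    show "\<exists>u\<in>tree_vertices d. (cc d^^n) u \<noteq> u"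
      apply (rule period_step[OF p _ C_ret[OF d3] C_nret[OF d3] less.prems])
      using d3 less.IH by auto
    show "\<exists>u\<in>tree_vertices d. (bb d^^n) u \<noteq> u"
      apply (rule period_step[OF p _ B_ret[OF d3] B_nret[OF d3] less.prems])
      using d3 less.IH by auto
  qed
qed

lemma cc_inf: "infinite_order_aut d (cc d)"
  unfolding infinite_order_aut_def using bc_inf by blast
lemma bb_inf: "infinite_order_aut d (bb d)"
  unfolding infinite_order_aut_def using bc_inf by blast

end



context fixes d :: nat assumes d3: "3 \<le> d" begin

definition "uu j = word_act d ([1..<Suc j] @ rev[2..<j])"
definition "vv j = word_act d (2 # [1..<Suc j] @ rev[3..<j])"

lemma uL: "uu j w = word_act d (rev[2..<j]) (word_act d [1..<Suc j] w)"
  unfolding uu_def by (simp add: wa_append)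
lemma vL: "vv j w = word_act d (rev[3..<j]) (word_act d [1..<Suc j] (gen_act d 2 w))"
  unfolding vv_def by (simp add: wa_append wa_Cons)

lemma U1: "2 \<le> j \<Longrightarrow> j < d \<Longrightarrow> uu j (2#w) = Suc 0 # gen_act d 2 w"
  by (simp add: uL P_mid R_fix del: upt_Suc)
lemma U2: "2 \<le> j \<Longrightarrow> j < d \<Longrightarrow> uu j (Suc 0#w) = Suc j # word_act d [1..<Suc j] w"
  by (simp add: uL P_first R_fix del: upt_Suc)
lemma U3: "2 \<le> j \<Longrightarrow> j < d \<Longrightarrow> uu j (Suc j#w) = 2 # word_act d (rev[3..<Suc j]) (gen_act d (Suc j) w)"
  using R_top[of 2 j d] by (simp add: uL P_mid del: upt_Suc)

lemma U_ret: "2 \<le> j \<Longrightarrow> j < d \<Longrightarrow> (uu j^^3) (2#w) = 2 # vv (Suc j) w"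
proof -
  assume j: "2 \<le> j" "j < d"
  have "(uu j^^3) (2#w) = uu j (uu j (uu j (2#w)))" by (simp add: numeral_eq_Suc)
  also have "\<dots> = 2 # word_act d (rev[3..<Suc j]) (gen_act d (Suc j) (word_act d [1..<Suc j] (gen_act d 2 w)))"
    using j by (simp add: U1 U2 U3)
  also have "\<dots> = 2 # vv (Suc j) w"
  proof -
    have "[1..<Suc (Suc j)] = [1..<Suc j] @ [Suc j]" by (simp only: upt_Suc_append[symmetric])
    then show ?thesis unfolding vL by (simp only: wa_append wa_single)
  qed
  finally show ?thesis .
qed

lemma V1: "3 \<le> j \<Longrightarrow> j < d \<Longrightarrow> vv j (Suc 0#w) = Suc j # word_act d [1..<Suc j] w"
  by (simp add: vL ga_fix P_first R_fix del: upt_Suc)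
lemma V2: "3 \<le> j \<Longrightarrow> j < d \<Longrightarrow> vv j (Suc j#w) = 3 # word_act d (rev[4..<Suc j]) (gen_act d (Suc j) w)"
  using R_top[of 3 j d] by (simp add: vL ga_fix P_mid numeral_eq_Suc del: upt_Suc)
lemma V3: "3 \<le> j \<Longrightarrow> j < d \<Longrightarrow> vv j (3#w) = Suc 0 # word_act d [3,2] w"
proof -
  assume j: "3 \<le> j" "j < d"
  have "gen_act d 2 (3#w) = 2 # gen_act d 3 w" using ga_sj[of 2 d w] j by (simp add: numeral_eq_Suc)
  then show ?thesis using j by (simp add: vL P_mid R_fix wa_Cons del: upt_Suc)
qed

lemma V_ret: "3 \<le> j \<Longrightarrow> j < d \<Longrightarrow> (vv j^^3) (Suc 0#w) = Suc 0 # uu (Suc j) w"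
proof -
  assume j: "3 \<le> j" "j < d"
  have "(vv j^^3) (Suc 0#w) = vv j (vv j (vv j (Suc 0#w)))" by (simp add: numeral_eq_Suc)
  also have "\<dots> = Suc 0 # word_act d [3,2] (word_act d (rev[4..<Suc j]) (gen_act d (Suc j) (word_act d [1..<Suc j] w)))"
    using j by (simp add: V1 V2 V3 del: upt_Suc)
  also have "\<dots> = Suc 0 # uu (Suc j) w"
  proof -
    have a: "[1..<Suc (Suc j)] = [1..<Suc j] @ [Suc j]" by (simp only: upt_Suc_append[symmetric])
    have b: "[2..<Suc j] = 2 # 3 # [4..<Suc j]" using j by (simp add: upt_conv_Cons numeral_eq_Suc)
    show ?thesis unfolding uL a b by (simp add: wa_append wa_Cons del: upt_Suc)
  qed
  finally show ?thesis .
qed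

lemma U_d: "uu d (2#w) = 2 # bb d w"
proof -
  have "uu d w' = word_act d (rev[2..<d]) (cc d w')" for w' by (simp only: uu_def cc_def[OF d3] wa_append)
  then show ?thesis using d3 R_top[of 2 d d] C1[OF d3] by (simp add: bb_def[OF d3] wa_Cons del: upt_Suc)
qed

lemma V_d: "vv d (Suc 0#w) = Suc 0 # cc d w"
proof -
  have "vv d w' = word_act d (rev[3..<d]) (cc d (gen_act d 2 w'))" for w' by (simp only: vv_def cc_def[OF d3] wa_append wa_Cons append_Cons comp_apply)
  then show ?thesis using d3 C3[OF d3] by (simp add: ga_fix R_fix)
qed

lemma chain: "m \<le> d-2 \<Longrightarrow> infinite_order_aut d (uu (d-m)) \<and> (3 \<le> d-m \<longrightarrow> infinite_order_aut d (vv (d-m)))"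
proof (induction m)
  case 0
  have "infinite_order_aut d (uu d)"
    by (rule lift[where k=1 and x=2 and h="bb d"]) (use d3 U_d bb_inf[OF d3] in auto)
  moreover have "infinite_order_aut d (vv d)"
    by (rule lift[where k=1 and x="Suc 0" and h="cc d"]) (use d3 V_d cc_inf[OF d3] in auto)
  ultimately show ?case by simp
next
  case (Suc m)
  define j where "j = d - Suc m"
  have j: "2 \<le> j" "j < d" "Suc j = d - m" using Suc.prems d3 unfolding j_def by auto
  have IH: "infinite_order_aut d (uu (Suc j))" "3 \<le> Suc j \<Longrightarrow> infinite_order_aut d (vv (Suc j))"
    using Suc j by auto
  have "infinite_order_aut d (uu j)"
    by (rule lift[where k=3 and x=2 and h="vv (Suc j)"]) (use d3 j U_ret IH in auto)
  moreover have "3 \<le> j \<Longrightarrow> infinite_order_aut d (vv j)"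
    by (rule lift[where k=3 and x="Suc 0" and h="uu (Suc j)"]) (use d3 j V_ret IH in auto)
  ultimately show ?case unfolding j_def by simp
qed

lemma G_cyc: "1 \<le> i \<Longrightarrow> i < d \<Longrightarrow> k \<le> i \<Longrightarrow>
  (word_act d [1..<Suc i]^^Suc k) (Suc 0#w) = (Suc i - k) # word_act d ([1..<Suc i] @ rev[Suc (Suc i) - k..<Suc (Suc i)]) w"
proof (induction k)
  case 0 then show ?case by (simp add: P_first del: upt_Suc)
next
  case (Suc k)
  define x where "x = Suc i - Suc k"
  have s: "Suc (Suc i) - Suc k = Suc x" "Suc (Suc i) - k = Suc (Suc x)" "Suc i - k = Suc x"
    using Suc.prems unfolding x_def by auto
  have e: "[Suc x..<Suc (Suc i)] = Suc x # [Suc (Suc x)..<Suc (Suc i)]"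
    using Suc.prems unfolding x_def by (intro upt_conv_Cons) auto
  have "(word_act d [1..<Suc i]^^Suc (Suc k)) (Suc 0#w)
      = word_act d [1..<Suc i] (Suc x # word_act d ([1..<Suc i] @ rev[Suc (Suc x)..<Suc (Suc i)]) w)"
    using Suc by (simp del: upt_Suc add: s)
  also have "\<dots> = x # gen_act d (Suc x) (word_act d ([1..<Suc i] @ rev[Suc (Suc x)..<Suc (Suc i)]) w)"
    using Suc.prems P_mid[of 1 "Suc i" d "Suc x"] unfolding x_def by auto
  also have "\<dots> = (Suc i - Suc k) # word_act d ([1..<Suc i] @ rev[Suc (Suc i) - Suc k..<Suc (Suc i)]) w"
    unfolding s(1) e x_def[symmetric] by (simp del: upt_Suc add: wa_append wa_single)
  finally show ?case .
qed

lemma G_inf: "1 \<le> i \<Longrightarrow> i < d \<Longrightarrow> infinite_order_aut d (word_act d [1..<Suc i])"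
proof -
  assume i: "1 \<le> i" "i < d"
  have sec: "(word_act d [1..<Suc i]^^Suc i) (Suc 0#w) = Suc 0 # uu (Suc i) w" for w
  proof -
    have "[2..<Suc (Suc i)] = [2..<Suc i] @ [Suc i]" "[1..<Suc (Suc i)] = [1..<Suc i] @ [Suc i]"
      using i by (simp_all only: upt_Suc_append[symmetric])
    then show ?thesis using G_cyc[OF i order.refl, of w] i unfolding uu_def
      by (simp del: upt_Suc add: wa_append wa_single)
  qed
  have "infinite_order_aut d (uu (d - (d - Suc i)))"
    using chain[of "d - Suc i"] i by auto
  then have inf: "infinite_order_aut d (uu (Suc i))" using i by simp
  show ?thesis
    by (rule lift[where k="Suc i" and x="Suc 0" and h="uu (Suc i)"]) (use d3 sec inf in auto)
qed

end

theorem lemma3p6: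
  fixes d i :: nat
  assumes "d \<ge> 3" and "1 \<le> i" and "i < d"
  shows "infinite_order_aut d (word_act d [1..<i+1])"
proof -
  have e: "i+1 = Suc i" by simp
  show ?thesis unfolding e by (rule G_inf[OF assms(1) assms(2) assms(3)])
qed


end
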